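(* Let $r>0$ and $A\in\mathrm{GL}(2,\mathbb{R})$. There exists $s_0$ such that for all $s\ge s_0$, for every $\Gamma\in\mathcal{H}$ and every non-empty compact $K\subseteq\mathbb{R}^2$ with $K\in\mathcal{LA}_s(\Gamma)$, we have $A(K)\in\mathcal{LA}_r(A(\Gamma))$.
   Context: $d_H$ is the Hausdorff distance. $\mathcal{H}$ is the set of homothety types: non-empty compact subsets of $\mathbb{R}^2$ modulo the group generated by translations and homotheties of positive ratio; $A(\Gamma)$ is the homothety type of $A(\hat\Gamma)$ for any $\hat\Gamma\in\Gamma$. For $r>0$, $\Gamma\in\mathcal{H}$ and non-empty compact $K$, $K\in\mathcal{LA}_r(\Gamma)$ ($K$ is an $r$-large approximate of $\Gamma$) means $\mathrm{diam}(K)>r$ and there is $\hat\Gamma\in\Gamma$ of diameter $1$ with $d_H(K/\mathrm{diam}(K),\hat\Gamma)<1/r$. *)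

theory Defs
  imports "HOL-Analysis.Analysis"
begin

text \<open>Hausdorff distance (meaningful for non-empty bounded sets; used here only for
non-empty compact ones).\<close>
definition hausdorff_dist :: "'a::metric_space set \<Rightarrow> 'a set \<Rightarrow> real" where
  "hausdorff_dist S T = max (SUP x\<in>S. setdist {x} T) (SUP y\<in>T. setdist {y} S)"

text \<open>T is the image of S under a map of the group generated by translations and
homotheties of positive ratio, i.e. a map x \<mapsto> c x + v with c > 0.\<close>
definition homothetic :: "(real^2) set \<Rightarrow> (real^2) set \<Rightarrow> bool" where
  "homothetic S T \<longleftrightarrow> (\<exists>c>0. \<exists>v. T = (\<lambda>x. c *\<^sub>R x + v) ` S)"

definition homothety_class :: "(real^2) set \<Rightarrow> (real^2) set set" where
  "homothety_class S = {T. homothetic S T}"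

text \<open>The set \<H> of homothety types.\<close>
definition homothety_types :: "(real^2) set set set" where
  "homothety_types = {homothety_class S | S. S \<noteq> {} \<and> compact S}"

text \<open>A(\<Gamma>): apply the linear map to every member of the class.\<close>
definition type_image :: "real^2^2 \<Rightarrow> (real^2) set set \<Rightarrow> (real^2) set set" where
  "type_image A \<Gamma> = (\<lambda>S. (\<lambda>x. A *v x) ` S) ` \<Gamma>"

text \<open>K is an r-large approximate of \<Gamma>.\<close>
definition large_approx :: "real \<Rightarrow> (real^2) set set \<Rightarrow> (real^2) set \<Rightarrow> bool" where
  "large_approx r \<Gamma> K \<longleftrightarrow> diameter K > r \<and>
     (\<exists>G\<in>\<Gamma>. diameter G = 1 \<and>
        hausdorff_dist ((\<lambda>x. (1 / diameter K) *\<^sub>R x) ` K) G < 1 / r)"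

end

theory Submission
  imports Defs
begin

lemma hd_le:
  fixes S T :: "'a::metric_space set"
  assumes "S \<noteq> {}" "T \<noteq> {}"
    and "\<And>x. x \<in> S \<Longrightarrow> \<exists>y\<in>T. dist x y \<le> d"
    and "\<And>y. y \<in> T \<Longrightarrow> \<exists>x\<in>S. dist y x \<le> d"
  shows "hausdorff_dist S T \<le> d"
  unfolding hausdorff_dist_def
proof (rule max.boundedI)
  show "(SUP x\<in>S. setdist {x} T) \<le> d"
  proof (rule cSUP_least)
    fix x assume "x \<in> S"
    then obtain y where "y \<in> T" "dist x y \<le> d" using assms(3) by blast
    then show "setdist {x} T \<le> d" using setdist_le_dist[of x "{x}" y T] by simp
  qed (use assms in auto)
  show "(SUP y\<in>T. setdist {y} S) \<le> d"
  proof (rule cSUP_least)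
    fix y assume "y \<in> T"
    then obtain x where "x \<in> S" "dist y x \<le> d" using assms(4) by blast
    then show "setdist {y} S \<le> d" using setdist_le_dist[of y "{y}" x S] by simp
  qed (use assms in auto)
qed

lemma sup_setdist_ge:
  fixes S T :: "'a::metric_space set"
  assumes "bounded S" "T \<noteq> {}" "x \<in> S"
  shows "setdist {x} T \<le> (SUP x\<in>S. setdist {x} T)"
proof (rule cSUP_upper[OF assms(3)])
  obtain t where t: "t \<in> T" using assms by blast
  obtain e where e: "\<And>z. z \<in> S \<Longrightarrow> dist t z \<le> e"
    using bounded_any_center[of S t] assms(1) by blast
  show "bdd_above ((\<lambda>x. setdist {x} T) ` S)"
  proof (rule bdd_aboveI2)
    fix z assume "z \<in> S"
    have "setdist {z} T \<le> dist z t" using setdist_le_dist[of z "{z}" t T] t by simp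
    also have "\<dots> \<le> e" using e[OF \<open>z \<in> S\<close>] by (simp add: dist_commute)
    finally show "setdist {z} T \<le> e" .
  qed
qed

lemma hd_lt1:
  fixes S T :: "'a::metric_space set"
  assumes "bounded S" "T \<noteq> {}" "x \<in> S" "hausdorff_dist S T < e"
  shows "\<exists>y\<in>T. dist x y < e"
proof -
  have "setdist {x} T < e"
    using sup_setdist_ge[OF assms(1-3)] assms(4) unfolding hausdorff_dist_def by linarith
  then obtain x' y where "x' \<in> {x}" "y \<in> T" "dist x' y < e"
    using setdist_ltE[of "{x}" T e] assms(2) by blast
  then show ?thesis by auto
qed

lemma hd_lt2:
  fixes S T :: "'a::metric_space set"
  assumes "bounded T" "S \<noteq> {}" "y \<in> T" "hausdorff_dist S T < e"
  shows "\<exists>x\<in>S. dist y x < e"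
proof -
  have "setdist {y} S < e"
    using sup_setdist_ge[OF assms(1-3)] assms(4) unfolding hausdorff_dist_def by linarith
  then obtain y' x where "y' \<in> {y}" "x \<in> S" "dist y' x < e"
    using setdist_ltE[of "{y}" S e] assms(2) by blast
  then show ?thesis by auto
qed

lemma diam_affine:
  fixes S :: "'a::real_normed_vector set"
  assumes "bounded S" "c > 0"
  shows "diameter ((\<lambda>x. c *\<^sub>R x + w) ` S) = c * diameter S"
proof (cases "S = {}")
  case True then show ?thesis by simp
next
  case False
  have bi: "bounded ((\<lambda>x. c *\<^sub>R x + w) ` S)"
  proof -
    have "bounded ((+) w ` ((*\<^sub>R) c ` S))"
      using assms(1) by (intro bounded_translation bounded_scaling)
    moreover have "(+) w ` ((*\<^sub>R) c ` S) = (\<lambda>x. c *\<^sub>R x + w) ` S"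
      by (auto simp: image_image add.commute)
    ultimately show ?thesis by simp
  qed
  have n: "norm ((c *\<^sub>R x + w) - (c *\<^sub>R y + w)) = c * norm (x - y)" for x y
  proof -
    have "(c *\<^sub>R x + w) - (c *\<^sub>R y + w) = c *\<^sub>R (x - y)" by (simp add: algebra_simps)
    then show ?thesis using assms(2) by simp
  qed
  show ?thesis
  proof (rule antisym)
    show "diameter ((\<lambda>x. c *\<^sub>R x + w) ` S) \<le> c * diameter S"
    proof (rule diameter_le)
      fix u v assume "u \<in> (\<lambda>x. c *\<^sub>R x + w) ` S" "v \<in> (\<lambda>x. c *\<^sub>R x + w) ` S"
      then obtain x y where xy: "x \<in> S" "y \<in> S" "u = c *\<^sub>R x + w" "v = c *\<^sub>R y + w" by auto
      have "norm (x - y) \<le> diameter S"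
        using diameter_bounded_bound[OF assms(1) xy(1,2)] by (simp add: dist_norm)
      then show "norm (u - v) \<le> c * diameter S" using xy n assms(2) by simp
    qed (use False in auto)
    have "diameter S \<le> diameter ((\<lambda>x. c *\<^sub>R x + w) ` S) / c"
    proof (rule diameter_le)
      fix x y assume xy: "x \<in> S" "y \<in> S"
      have "dist (c *\<^sub>R x + w) (c *\<^sub>R y + w) \<le> diameter ((\<lambda>x. c *\<^sub>R x + w) ` S)"
        using xy by (intro diameter_bounded_bound[OF bi]) auto
      then have "c * norm (x - y) \<le> diameter ((\<lambda>x. c *\<^sub>R x + w) ` S)"
        using n by (simp add: dist_norm)
      then show "norm (x - y) \<le> diameter ((\<lambda>x. c *\<^sub>R x + w) ` S) / c"
        using assms(2) by (simp add: field_simps)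
    qed (use False in auto)
    then show "c * diameter S \<le> diameter ((\<lambda>x. c *\<^sub>R x + w) ` S)"
      using assms(2) by (simp add: field_simps)
  qed
qed

lemma diam_lower:
  fixes S :: "'a::real_normed_vector set" and f :: "'a \<Rightarrow> 'b::real_normed_vector"
  assumes "bounded S" "bounded (f ` S)" "m > 0" "\<And>x y. m * norm (x - y) \<le> norm (f x - f y)"
  shows "m * diameter S \<le> diameter (f ` S)"
proof -
  have "diameter S \<le> diameter (f ` S) / m"
  proof (rule diameter_le)
    fix x y assume xy: "x \<in> S" "y \<in> S"
    have "dist (f x) (f y) \<le> diameter (f ` S)"
      using xy by (intro diameter_bounded_bound[OF assms(2)]) auto
    then have "m * norm (x - y) \<le> diameter (f ` S)"
      using assms(4)[of x y] by (simp add: dist_norm)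
    then show "norm (x - y) \<le> diameter (f ` S) / m"
      using assms(3) by (simp add: field_simps)
  qed (use diameter_ge_0[OF assms(2)] assms(3) in auto)
  then show ?thesis using assms(3) by (simp add: field_simps)
qed

lemma tri3:
  fixes u w x1 x2 :: "'a::real_normed_vector"
  shows "norm (u - w) \<le> norm (u - x1) + norm (x1 - x2) + norm (w - x2)"
proof -
  have "u - w = ((u - x1) + (x1 - x2)) - (w - x2)" by (simp add: algebra_simps)
  then have "norm (u - w) \<le> norm ((u - x1) + (x1 - x2)) + norm (w - x2)"
    by (metis norm_triangle_ineq4)
  also have "\<dots> \<le> norm (u - x1) + norm (x1 - x2) + norm (w - x2)"
    using norm_triangle_ineq[of "u - x1" "x1 - x2"] by simp
  finally show ?thesis .
qed

theorem mainTheorem6: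
  fixes r :: real and A :: "real^2^2"
  assumes "r > 0" and "invertible A"
  shows "\<exists>s0. \<forall>s\<ge>s0. \<forall>\<Gamma>\<in>homothety_types. \<forall>K::(real^2) set.
           K \<noteq> {} \<and> compact K \<and> large_approx s \<Gamma> K \<longrightarrow>
           large_approx r (type_image A \<Gamma>) ((\<lambda>x. A *v x) ` K)"
proof -
  define f where "f = (\<lambda>x::real^2. A *v x)"
  have lf: "linear f" unfolding f_def by (rule matrix_vector_mul_linear)
  obtain A' where A': "A' ** A = mat 1" using assms(2) unfolding invertible_def by blast
  have lg: "linear ((*v) A')" by (rule matrix_vector_mul_linear)
  have gf: "(*v) A' \<circ> f = id"
    by (rule ext) (simp add: f_def matrix_vector_mul_assoc A')
  obtain M where M: "M > 0" "\<And>x. norm (f x) \<le> M * norm x"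
    using linear_bounded_pos[OF lf] by blast
  obtain m where m: "m > 0" "\<And>x. m * norm x \<le> norm (f x)"
    using linear_invertible_bounded_below_pos[OF lf lg gf] by blast
  have fdiff: "f x - f y = f (x - y)" for x y using linear_diff[OF lf] by simp
  have Mle: "norm (f x - f y) \<le> M * norm (x - y)" for x y using M(2)[of "x - y"] fdiff by simp
  have mle: "m * norm (x - y) \<le> norm (f x - f y)" for x y using m(2)[of "x - y"] fdiff by simp
  have Meps: "norm (f x - f y) \<le> M * e" if "dist x y < e" for x y e
  proof -
    have "M * norm (x - y) \<le> M * e" using that M(1) by (intro mult_left_mono) (auto simp: dist_norm)
    then show ?thesis using Mle[of x y] by linarith
  qed
  have contf: "continuous_on UNIV f" using lf by (simp add: linear_continuous_on linear_linear)
  define C where "C = 2 * M / m + 4 * M * M / (m * m)"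
  have Cpos: "C > 0" unfolding C_def using M(1) m(1) by (intro add_pos_pos divide_pos_pos mult_pos_pos) auto
  define s0 where "s0 = max (max (r / m + 1) (4 * M / m)) (2 * C * r)"
  have s0pos: "s0 > 0" unfolding s0_def using M m by (simp add: less_max_iff_disj)
  show ?thesis
  proof (intro exI[of _ s0] allI impI ballI)
    fix s \<Gamma> and K :: "(real^2) set"
    assume ss0: "s0 \<le> s" and \<Gamma>: "\<Gamma> \<in> homothety_types"
      and K: "K \<noteq> {} \<and> compact K \<and> large_approx s \<Gamma> K"
    have spos: "s > 0" using ss0 s0pos by simp
    obtain S0 where S0: "\<Gamma> = homothety_class S0" "S0 \<noteq> {}" "compact S0"
      using \<Gamma> unfolding homothety_types_def by blast
    define D where "D = diameter K"
    have Ds: "D > s" using K unfolding large_approx_def D_def by simp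
    have Dpos: "D > 0" using Ds spos by simp
    define K' where "K' = (\<lambda>x. (1 / D) *\<^sub>R x) ` K"
    obtain G where G: "G \<in> \<Gamma>" "diameter G = 1" "hausdorff_dist K' G < 1 / s"
      using K unfolding large_approx_def K'_def D_def by blast
    obtain c v where cv: "c > 0" "G = (\<lambda>x. c *\<^sub>R x + v) ` S0"
      using G(1) S0(1) unfolding homothety_class_def homothetic_def by blast
    have Gc: "compact G" unfolding cv(2)
      by (rule compact_continuous_image[OF _ S0(3)]) (intro continuous_intros)
    have Gne: "G \<noteq> {}" using cv(2) S0(2) by simp
    have K'c: "compact K'" unfolding K'_def using K by (intro compact_scaling) simp
    have K'ne: "K' \<noteq> {}" using K unfolding K'_def by simp
    have Gb: "bounded G" using Gc by (rule compact_imp_bounded)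
    have K'b: "bounded K'" using K'c by (rule compact_imp_bounded)
    define \<epsilon> where "\<epsilon> = 1 / s"
    have P1: "\<exists>g\<in>G. dist x g < \<epsilon>" if "x \<in> K'" for x
      using hd_lt1[OF K'b Gne that G(3)] \<epsilon>_def by simp
    have P2: "\<exists>x\<in>K'. dist g x < \<epsilon>" if "g \<in> G" for g
      using hd_lt2[OF Gb K'ne that G(3)] \<epsilon>_def by simp
    have fGb: "bounded (f ` G)"
      using compact_continuous_image[OF continuous_on_subset[OF contf] Gc] compact_imp_bounded by blast
    have fK'b: "bounded (f ` K')"
      using compact_continuous_image[OF continuous_on_subset[OF contf] K'c] compact_imp_bounded by blast
    have Kb: "bounded K" using K compact_imp_bounded by blast
    have fKb: "bounded (f ` K)"
      using compact_continuous_image[OF continuous_on_subset[OF contf], of K] K compact_imp_bounded by blast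
    define a where "a = diameter (f ` K')"
    define b where "b = diameter (f ` G)"
    have bm: "b \<ge> m" using diam_lower[OF Gb fGb m(1) mle] G(2) unfolding b_def by simp
    have ab1: "b \<le> a + 2 * M * \<epsilon>" unfolding b_def
    proof (rule diameter_le)
      fix u w assume "u \<in> f ` G" "w \<in> f ` G"
      then obtain g1 g2 where g: "g1 \<in> G" "g2 \<in> G" "u = f g1" "w = f g2" by auto
      obtain x1 where x1: "x1 \<in> K'" "dist g1 x1 < \<epsilon>" using P2[OF g(1)] by blast
      obtain x2 where x2: "x2 \<in> K'" "dist g2 x2 < \<epsilon>" using P2[OF g(2)] by blast
      have "norm (f x1 - f x2) \<le> a" unfolding a_def
        using diameter_bounded_bound[OF fK'b, of "f x1" "f x2"] x1 x2 by (simp add: dist_norm)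
      moreover have "norm (f g1 - f x1) \<le> M * \<epsilon>"
        by (rule Meps[OF x1(2)])
      moreover have "norm (f g2 - f x2) \<le> M * \<epsilon>"
        by (rule Meps[OF x2(2)])
      moreover have "norm (f g1 - f g2) \<le> norm (f g1 - f x1) + norm (f x1 - f x2) + norm (f g2 - f x2)"
        by (rule tri3)
      ultimately show "norm (u - w) \<le> a + 2 * M * \<epsilon>" using g by simp
    qed (use Gne in auto)
    have ab2: "a \<le> b + 2 * M * \<epsilon>" unfolding a_def
    proof (rule diameter_le)
      fix u w assume "u \<in> f ` K'" "w \<in> f ` K'"
      then obtain g1 g2 where g: "g1 \<in> K'" "g2 \<in> K'" "u = f g1" "w = f g2" by auto
      obtain x1 where x1: "x1 \<in> G" "dist g1 x1 < \<epsilon>" using P1[OF g(1)] by blast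
      obtain x2 where x2: "x2 \<in> G" "dist g2 x2 < \<epsilon>" using P1[OF g(2)] by blast
      have "norm (f x1 - f x2) \<le> b" unfolding b_def
        using diameter_bounded_bound[OF fGb, of "f x1" "f x2"] x1 x2 by (simp add: dist_norm)
      moreover have "norm (f g1 - f x1) \<le> M * \<epsilon>"
        by (rule Meps[OF x1(2)])
      moreover have "norm (f g2 - f x2) \<le> M * \<epsilon>"
        by (rule Meps[OF x2(2)])
      moreover have "norm (f g1 - f g2) \<le> norm (f g1 - f x1) + norm (f x1 - f x2) + norm (f g2 - f x2)"
        by (rule tri3)
      ultimately show "norm (u - w) \<le> b + 2 * M * \<epsilon>" using g by simp
    qed (use K'ne in auto)
    have eps_pos: "\<epsilon> > 0" using spos \<epsilon>_def by simp
    have eps_s0: "\<epsilon> \<le> 1 / s0" using ss0 s0pos \<epsilon>_def by (simp add: frac_le)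
    have s0M: "4 * M / m \<le> s0" unfolding s0_def by simp
    have "1 / s0 \<le> m / (4 * M)"
      using s0M s0pos M(1) m(1) by (simp add: field_simps)
    moreover have "4 * M * \<epsilon> \<le> 4 * M * (1 / s0)" using eps_s0 M(1) by (intro mult_left_mono) auto
    ultimately have "4 * M * \<epsilon> \<le> m" using M(1) by (simp add: field_simps)
    then have epsM: "2 * M * \<epsilon> \<le> m / 2" by simp
    have am: "a \<ge> m / 2" using ab1 bm epsM by linarith
    have apos: "a > 0" using am m(1) by simp
    have bpos: "b > 0" using bm m(1) by simp
    have fK'eq: "f ` K' = (\<lambda>y. (1 / D) *\<^sub>R y + 0) ` (f ` K)"
      unfolding K'_def by (auto simp: image_image linear_scale[OF lf])
    have diamfK: "a = (1 / D) * diameter (f ` K)"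
      unfolding a_def fK'eq using diam_affine[OF fKb, of "1 / D" 0] Dpos by simp
    have dfK: "diameter (f ` K) = D * a" using diamfK Dpos by (simp add: field_simps)
    have "m * D \<le> diameter (f ` K)" using diam_lower[OF Kb fKb m(1) mle] D_def by simp
    moreover have "m * D > r"
    proof -
      have "r / m + 1 \<le> s0" unfolding s0_def by simp
      then have "r / m < D" using ss0 Ds by linarith
      then show ?thesis using m(1) by (simp add: field_simps)
    qed
    ultimately have big: "diameter (f ` K) > r" by linarith
    obtain p where p: "p \<in> G" using Gne by blast
    define k where "k = 1 / a - 1 / b"
    define T where "T = (\<lambda>z. (1 / b) *\<^sub>R z + k *\<^sub>R p) ` G"
    define G' where "G' = (\<lambda>z. (1 / b) *\<^sub>R f z + k *\<^sub>R f p) ` G"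
    have fT: "f ` T = G'" unfolding T_def G'_def
      by (auto simp: image_image linear_add[OF lf] linear_scale[OF lf])
    have TG: "T \<in> \<Gamma>"
    proof -
      have "T = (\<lambda>x. (c / b) *\<^sub>R x + ((1 / b) *\<^sub>R v + k *\<^sub>R p)) ` S0"
        unfolding T_def cv(2) by (auto simp: image_image algebra_simps)
      then have "homothetic S0 T" unfolding homothetic_def using cv(1) bpos
        by (intro exI[of _ "c / b"]) auto
      then show ?thesis using S0(1) unfolding homothety_class_def by simp
    qed
    have G'I: "G' \<in> type_image A \<Gamma>"
      unfolding type_image_def using fT TG f_def by blast
    have G'd: "diameter G' = 1"
    proof -
      have "G' = (\<lambda>y. (1 / b) *\<^sub>R y + k *\<^sub>R f p) ` (f ` G)" unfolding G'_def by (auto simp: image_image)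
      then show ?thesis using diam_affine[OF fGb, of "1 / b" "k *\<^sub>R f p"] bpos b_def by simp
    qed
    define \<delta> where "\<delta> = M * \<epsilon> / a + \<bar>k\<bar> * M"
    have keyest: "norm ((1 / a) *\<^sub>R f x - ((1 / b) *\<^sub>R f g + k *\<^sub>R f p)) \<le> \<delta>"
      if "g \<in> G" "dist x g < \<epsilon>" for x g
    proof -
      have eq: "(1 / a) *\<^sub>R f x - ((1 / b) *\<^sub>R f g + k *\<^sub>R f p)
          = (1 / a) *\<^sub>R (f x - f g) + k *\<^sub>R (f g - f p)"
        unfolding k_def by (simp add: algebra_simps)
      have n1: "norm ((1 / a) *\<^sub>R (f x - f g)) \<le> M * \<epsilon> / a"
      proof -
        have "norm (f x - f g) \<le> M * \<epsilon>"
          by (rule Meps[OF that(2)])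
        moreover have "norm ((1 / a) *\<^sub>R (f x - f g)) = norm (f x - f g) / a"
          using apos by (simp del: scaleR_right_diff_distrib)
        ultimately show ?thesis using apos by (simp del: scaleR_right_diff_distrib add: divide_right_mono)
      qed
      have gp: "norm (g - p) \<le> 1"
        using diameter_bounded_bound[OF Gb that(1) p] G(2) by (simp add: dist_norm)
      have n2: "norm (k *\<^sub>R (f g - f p)) \<le> \<bar>k\<bar> * M"
      proof -
        have "M * norm (g - p) \<le> M * 1" using gp M(1) by (intro mult_left_mono) auto
        then have "norm (f g - f p) \<le> M" using Mle[of g p] by linarith
        then show ?thesis by (simp add: mult_left_mono)
      qed
      show ?thesis unfolding eq \<delta>_def using n1 n2 norm_triangle_ineq
        by (intro order_trans[OF norm_triangle_ineq] add_mono)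
    qed
    have \<delta>C: "\<delta> \<le> C * \<epsilon>"
    proof -
      have t1: "M * \<epsilon> / a \<le> 2 * M * \<epsilon> / m"
      proof -
        have "M * \<epsilon> / a \<le> M * \<epsilon> / (m / 2)"
          using am m(1) M(1) eps_pos by (intro divide_left_mono) auto
        also have "M * \<epsilon> / (m / 2) = 2 * M * \<epsilon> / m" by simp
        finally show ?thesis .
      qed
      have kk: "\<bar>k\<bar> = \<bar>b - a\<bar> / (a * b)" unfolding k_def using apos bpos
        by (simp add: field_simps abs_div)
      have "\<bar>b - a\<bar> \<le> 2 * M * \<epsilon>" using ab1 ab2 by linarith
      moreover have "a * b \<ge> (m / 2) * m" using am bm m(1) by (intro mult_mono) auto
      ultimately have "\<bar>k\<bar> \<le> (2 * M * \<epsilon>) / ((m / 2) * m)" unfolding kk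
        using m(1) by (intro frac_le) auto
      then have "\<bar>k\<bar> * M \<le> (2 * M * \<epsilon>) / ((m / 2) * m) * M" using M(1) by (intro mult_right_mono) auto
      also have "\<dots> = 4 * M * M / (m * m) * \<epsilon>" using m(1) by (simp add: field_simps)
      finally show ?thesis unfolding \<delta>_def C_def using t1 by (simp add: field_simps)
    qed
    have Cr: "C * \<epsilon> < 1 / r"
    proof -
      have "2 * C * r \<le> s0" unfolding s0_def by simp
      then have "1 / s0 \<le> 1 / (2 * C * r)" using Cpos assms(1) s0pos
        by (intro divide_left_mono) auto
      then have "\<epsilon> \<le> 1 / (2 * C * r)" using eps_s0 by linarith
      then have "C * \<epsilon> \<le> C * (1 / (2 * C * r))" using Cpos by (intro mult_left_mono) auto
      then have "C * \<epsilon> \<le> C / (2 * C * r)" by simp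
      also have "\<dots> = 1 / (2 * r)" using Cpos by simp
      also have "\<dots> < 1 / r" using assms(1) by (simp add: field_simps)
      finally show ?thesis .
    qed
    have HD: "hausdorff_dist ((\<lambda>x. (1 / diameter (f ` K)) *\<^sub>R x) ` (f ` K)) G' \<le> \<delta>"
    proof (rule hd_le)
      show "(\<lambda>x. (1 / diameter (f ` K)) *\<^sub>R x) ` (f ` K) \<noteq> {}" using K by simp
      show "G' \<noteq> {}" using Gne G'_def by simp
    next
      fix u assume "u \<in> (\<lambda>x. (1 / diameter (f ` K)) *\<^sub>R x) ` (f ` K)"
      then obtain x where x: "x \<in> K" "u = (1 / (D * a)) *\<^sub>R f x" using dfK by auto
      have x': "(1 / D) *\<^sub>R x \<in> K'" using x(1) unfolding K'_def by (rule imageI)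
      have ux: "u = (1 / a) *\<^sub>R f ((1 / D) *\<^sub>R x)" using x(2) by (simp add: linear_scale[OF lf])
      obtain g where g: "g \<in> G" "dist ((1 / D) *\<^sub>R x) g < \<epsilon>" using P1[OF x'] by blast
      have "(1 / b) *\<^sub>R f g + k *\<^sub>R f p \<in> G'" using g(1) unfolding G'_def by (rule imageI)
      moreover have "dist u ((1 / b) *\<^sub>R f g + k *\<^sub>R f p) \<le> \<delta>"
        using keyest[OF g] ux by (simp add: dist_norm)
      ultimately show "\<exists>y\<in>G'. dist u y \<le> \<delta>" by blast
    next
      fix y assume "y \<in> G'"
      then obtain g where g: "g \<in> G" "y = (1 / b) *\<^sub>R f g + k *\<^sub>R f p" using G'_def by auto
      obtain x' where x': "x' \<in> K'" "dist g x' < \<epsilon>" using P2[OF g(1)] by blast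
      obtain x where x: "x \<in> K" "x' = (1 / D) *\<^sub>R x" using x' K'_def by auto
      have "(1 / a) *\<^sub>R f x' = (1 / diameter (f ` K)) *\<^sub>R f x"
        using x(2) dfK by (simp add: linear_scale[OF lf])
      then have "(1 / a) *\<^sub>R f x' \<in> (\<lambda>x. (1 / diameter (f ` K)) *\<^sub>R x) ` (f ` K)"
        using x(1) by auto
      moreover have "dist y ((1 / a) *\<^sub>R f x') \<le> \<delta>"
        using keyest[OF g(1), of x'] x'(2) g(2) by (simp add: dist_norm dist_commute norm_minus_commute)
      ultimately show "\<exists>u\<in>(\<lambda>x. (1 / diameter (f ` K)) *\<^sub>R x) ` (f ` K). dist y u \<le> \<delta>" by blast
    qed
    have "large_approx r (type_image A \<Gamma>) (f ` K)"
      unfolding large_approx_def using big G'I G'd HD \<delta>C Cr by (intro conjI bexI[of _ G']) auto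
    then show "large_approx r (type_image A \<Gamma>) ((\<lambda>x. A *v x) ` K)" unfolding f_def .
  qed
qed

end
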